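(* Let $k$ be a field of characteristic $p>0$, $P$ a finite poset, $R=\mathcal{R}_k[J(P)]$ the Hibi ring and $\mathfrak{m}=R_+$. Then \[ \limsup_{e\to\infty}\frac{\nu(p^e)}{p^e}\ \le\ \operatorname{rank}^*P+2, \] where $\nu(p^e)=\max\{r\in\mathbb{N}\mid\mathfrak{m}^r\not\subseteq\mathfrak{m}^{[p^e]}\}$.
   Context: Let $P=\{p_1,\dots,p_N\}$ be a finite poset and $J(P)$ the set of poset ideals of $P$ (down-closed subsets, including $\emptyset$ and $P$). The Hibi ring is $\mathcal{R}_k[J(P)]=k[\,T\prod_{p_i\in I}X_i\mid I\in J(P)\,]\subseteq k[T,X_1,\dots,X_N]$, each generator in degree $1$; $\mathfrak{m}=R_+$ is generated by these generators; $\mathfrak{m}^{[q]}=(x^q\mid x\in\mathfrak{m})$. $x\lessdot y$ means $x<y$ with no $z$ satisfying $x<z<y$. A path is a sequence $C=(q_1,\dots,q_t)$ of distinct elements of $P$ with $q_1$ minimal in $P$, consecutive elements related by $q_i\lessdot q_{i+1}$ or $q_{i+1}\lessdot q_i$, and $q_{t-1}\lessdot q_t$ (when $t\ge2$); it is maximal if $q_t$ is maximal in $P$. For $1<i<t$, $q_i$ is locally maximal if $q_{i-1}\lessdot q_i$ and $q_{i+1}\lessdot q_i$, locally minimal if $q_i\lessdot q_{i-1}$ and $q_i\lessdot q_{i+1}$; $q_1$ counts as locally minimal and $q_t$ as locally maximal. The decomposition $C=A_1+D_1+\cdots+D_{n-1}+A_n$ splits $C$ into consecutive blocks: $A_1$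 is $q_1$ through the first locally maximal element, $D_1$ the following elements through the next locally minimal element, $A_2$ the following elements through the next locally maximal element, etc., $A_n$ ending at $q_t$; $t(A_i)$ is the last element of $A_i$, $V(\cdot)$ the set of elements of a block, $\langle A\rangle=\{q\in P\mid q\le t(A)\}$, and $\langle A_i\setminus t(A_i)\rangle$ the poset ideal generated by the elements of $A_i$ other than $t(A_i)$. $C$ satisfies ( * ) if for all $1\le i\le n-1$: (1) $V(D_i)\cap(\bigcup_{m=1}^{i-1}\langle A_m\rangle\cup\langle A_i\setminus t(A_i)\rangle\cup\{t(A_i)\})=\emptyset$; (2) $V(A_{i+1})\cap\bigcup_{m=1}^{i}\langle A_m\rangle=\emptyset$. $\operatorname{len}^*C=\#\{i\mid q_i\lessdot q_{i+1}\}$, and $\operatorname{rank}^*P$ is the maximum of $\operatorname{len}^*C$ over maximal paths $C$ satisfying ( * ). *)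

theory Defs
  imports Main "HOL-Library.Poly_Mapping" "HOL-Library.Liminf_Limsup" "HOL-Library.Extended_Real"
begin

section \<open>Combinatorics of the poset (the whole finite type 'a with its order)\<close>

definition covers :: "'a::order \<Rightarrow> 'a \<Rightarrow> bool" where
  "covers x y \<longleftrightarrow> x < y \<and> \<not> (\<exists>z. x < z \<and> z < y)"

text \<open>A path (q_1,...,q_t) is a nonempty list; positions are 0-based.\<close>
definition is_path :: "'a::order list \<Rightarrow> bool" where
  "is_path C \<longleftrightarrow> C \<noteq> [] \<and> distinct C \<and> (\<forall>z. \<not> z < hd C) \<and>
     (\<forall>i. Suc i < length C \<longrightarrow> covers (C!i) (C!Suc i) \<or> covers (C!Suc i) (C!i)) \<and>
     (length C \<ge> 2 \<longrightarrow> covers (C!(length C - 2)) (C!(length C - 1)))"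

definition is_maximal_path :: "'a::order list \<Rightarrow> bool" where
  "is_maximal_path C \<longleftrightarrow> is_path C \<and> (\<forall>z. \<not> last C < z)"

definition loc_max :: "'a::order list \<Rightarrow> nat \<Rightarrow> bool" where
  "loc_max C j \<longleftrightarrow> j = length C - 1 \<or>
     (0 < j \<and> j + 1 < length C \<and> covers (C!(j-1)) (C!j) \<and> covers (C!(j+1)) (C!j))"

definition loc_min :: "'a::order list \<Rightarrow> nat \<Rightarrow> bool" where
  "loc_min C j \<longleftrightarrow> j = 0 \<or>
     (0 < j \<and> j + 1 < length C \<and> covers (C!j) (C!(j-1)) \<and> covers (C!j) (C!(j+1)))"

text \<open>Positions of the ends of the blocks A_1,...,A_n (locally maximal positions) and
  of the blocks D_1,...,D_{n-1} (locally minimal positions other than the first one).\<close>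
definition max_pos :: "'a::order list \<Rightarrow> nat list" where
  "max_pos C = sorted_list_of_set {j. j < length C \<and> loc_max C j}"

definition min_pos :: "'a::order list \<Rightarrow> nat list" where
  "min_pos C = sorted_list_of_set {j. 0 < j \<and> j < length C \<and> loc_min C j}"

definition nblocks :: "'a::order list \<Rightarrow> nat" where
  "nblocks C = length (max_pos C)"

text \<open>Block A_{i+1} (0-based i): positions from the start up to max_pos!i.\<close>
definition A_start :: "'a::order list \<Rightarrow> nat \<Rightarrow> nat" where
  "A_start C i = (if i = 0 then 0 else Suc (min_pos C ! (i - 1)))"

definition tA :: "'a::order list \<Rightarrow> nat \<Rightarrow> 'a" where
  "tA C i = C ! (max_pos C ! i)"

definition VA :: "'a::order list \<Rightarrow> nat \<Rightarrow> 'a set" where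
  "VA C i = {C ! j | j. A_start C i \<le> j \<and> j \<le> max_pos C ! i}"

definition VD :: "'a::order list \<Rightarrow> nat \<Rightarrow> 'a set" where
  "VD C i = {C ! j | j. max_pos C ! i < j \<and> j \<le> min_pos C ! i}"

definition downA :: "'a::order list \<Rightarrow> nat \<Rightarrow> 'a set" where
  "downA C i = {x. x \<le> tA C i}"

definition downA_minus_top :: "'a::order list \<Rightarrow> nat \<Rightarrow> 'a set" where
  "downA_minus_top C i = {x. \<exists>y \<in> VA C i - {tA C i}. x \<le> y}"

text \<open>Condition (*), with 0-based block indices (paper's i = our i+1).\<close>
definition cond_star :: "'a::order list \<Rightarrow> bool" where
  "cond_star C \<longleftrightarrow> (\<forall>i. i + 1 < nblocks C \<longrightarrow>
      VD C i \<inter> ((\<Union>m<i. downA C m) \<union> downA_minus_top C i \<union> {tA C i}) = {} \<and>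
      VA C (i + 1) \<inter> (\<Union>m\<le>i. downA C m) = {})"

definition len_star :: "'a::order list \<Rightarrow> nat" where
  "len_star C = card {i. Suc i < length C \<and> covers (C!i) (C!Suc i)}"

definition rank_star :: "'a::{finite,order} itself \<Rightarrow> nat" where
  "rank_star _ = Max {len_star (C :: 'a list) | C. is_maximal_path C \<and> cond_star C}"

text \<open>Polynomial ring k[T,X_p]: variable None is T, Some p is X_p.\<close>
type_synonym ('a, 'k) hpoly = "('a option \<Rightarrow>\<^sub>0 nat) \<Rightarrow>\<^sub>0 'k"

definition poset_ideals :: "'a::order set set" where
  "poset_ideals = {I. \<forall>x y. y \<in> I \<longrightarrow> x \<le> y \<longrightarrow> x \<in> I}"

definition hibi_gen :: "'a::order set \<Rightarrow> ('a, 'k::field) hpoly" where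
  "hibi_gen I = Poly_Mapping.single
      (Poly_Mapping.single None 1 + (\<Sum>p\<in>I. Poly_Mapping.single (Some p) 1)) 1"

text \<open>The Hibi ring R = k[T prod_{p in I} X_p | I in J(P)]: the k-subalgebra generated.\<close>
inductive_set hibi_ring :: "('a::order, 'k::field) hpoly set" where
  const: "Poly_Mapping.single 0 c \<in> hibi_ring"
| gen: "I \<in> poset_ideals \<Longrightarrow> hibi_gen I \<in> hibi_ring"
| add: "f \<in> hibi_ring \<Longrightarrow> g \<in> hibi_ring \<Longrightarrow> f + g \<in> hibi_ring"
| mult: "f \<in> hibi_ring \<Longrightarrow> g \<in> hibi_ring \<Longrightarrow> f * g \<in> hibi_ring"

inductive_set R_ideal :: "('a::order, 'k::field) hpoly set \<Rightarrow> ('a, 'k) hpoly set"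
  for S where
  zero: "0 \<in> R_ideal S"
| smult: "r \<in> hibi_ring \<Longrightarrow> s \<in> S \<Longrightarrow> r * s \<in> R_ideal S"
| add: "f \<in> R_ideal S \<Longrightarrow> g \<in> R_ideal S \<Longrightarrow> f + g \<in> R_ideal S"

text \<open>The homogeneous maximal ideal m = R_+, generated by the generators.\<close>
definition hibi_max :: "('a::order, 'k::field) hpoly set" where
  "hibi_max = R_ideal (hibi_gen ` poset_ideals)"

definition max_pow :: "nat \<Rightarrow> ('a::order, 'k::field) hpoly set" where
  "max_pow r = R_ideal {prod_list xs | xs. length xs = r \<and> set xs \<subseteq> hibi_max}"

definition max_frob :: "nat \<Rightarrow> ('a::order, 'k::field) hpoly set" where
  "max_frob q = R_ideal {x ^ q | x. x \<in> hibi_max}"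

definition hibi_nu :: "'a::order itself \<Rightarrow> 'k::field itself \<Rightarrow> nat \<Rightarrow> nat" where
  "hibi_nu _ _ q = Max {r. \<not> (max_pow r \<subseteq> (max_frob q :: ('a, 'k) hpoly set))}"

end

theory Submission
  imports Defs
begin


lemma covers_less: "covers x y \<Longrightarrow> x < y" by (simp add: covers_def)
lemma covers_asym: "covers x y \<Longrightarrow> \<not> covers y x" by (auto simp: covers_def)

fun cw :: "'a::order list \<Rightarrow> bool" where
  "cw (x # y # r) = ((covers x y \<or> covers y x) \<and> cw (y # r))"
| "cw _ = True"

fun vw :: "('a::order \<Rightarrow> nat) \<Rightarrow> nat \<Rightarrow> 'a list \<Rightarrow> bool" where
  "vw c q (x # y # r) = ((covers x y \<longrightarrow> c x < c y + q) \<and> vw c q (y # r))"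
| "vw c q _ = True"

fun ups :: "'a::order list \<Rightarrow> nat" where
  "ups (x # y # r) = (if covers x y then 1 else 0) + ups (y # r)"
| "ups _ = 0"

fun uc :: "'a::order list \<Rightarrow> bool" where
  "uc (x # y # r) = (covers x y \<and> uc (y # r))"
| "uc _ = True"

lemma join_aux: "xs \<noteq> [] \<Longrightarrow> ys \<noteq> [] \<Longrightarrow> last xs = hd ys \<Longrightarrow>
  butlast xs @ ys = hd xs # tl (butlast xs @ ys) \<and> (tl xs \<noteq> [] \<longrightarrow> butlast (tl xs) @ ys = hd (tl xs) # tl (butlast (tl xs) @ ys))"
  by (cases xs; cases "tl xs"; cases ys; auto)

lemma join_hd: "xs \<noteq> [] \<Longrightarrow> ys \<noteq> [] \<Longrightarrow> last xs = hd ys \<Longrightarrow> hd (butlast xs @ ys) = hd xs"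
  by (cases xs; cases ys; auto)

lemma join_props:
  assumes "xs \<noteq> []" "ys \<noteq> []" "last xs = hd ys"
  shows "cw (butlast xs @ ys) = (cw xs \<and> cw ys) \<and> vw c q (butlast xs @ ys) = (vw c q xs \<and> vw c q ys)
     \<and> ups (butlast xs @ ys) = ups xs + ups ys"
  using assms
proof (induction xs rule: induct_list012)
  case 1 then show ?case by simp
next
  case (2 x) then show ?case by (cases ys) auto
next
  case (3 x y zs)
  have e: "butlast (y#zs) @ ys = y # tl (butlast (y#zs) @ ys)"
    using join_hd[of "y#zs" ys] 3(3,4,5) by (cases "butlast (y#zs) @ ys") auto
  have "butlast (x#y#zs) @ ys = x # (butlast (y#zs) @ ys)" by simp
  also have "\<dots> = x # y # tl (butlast (y#zs) @ ys)" using e by simp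
  finally have e2: "butlast (x#y#zs) @ ys = x # y # tl (butlast (y#zs) @ ys)" .
  have IH: "cw (butlast (y#zs) @ ys) = (cw (y#zs) \<and> cw ys) \<and> vw c q (butlast (y#zs) @ ys) = (vw c q (y#zs) \<and> vw c q ys)
     \<and> ups (butlast (y#zs) @ ys) = ups (y#zs) + ups ys" using 3 by simp
  show ?case unfolding e2 using IH e by (metis (no_types, lifting) add.assoc cw.simps(1) ups.simps(1) vw.simps(1))
qed

lemma cw_nth: "cw xs \<longleftrightarrow> (\<forall>i. Suc i < length xs \<longrightarrow> covers (xs!i) (xs!Suc i) \<or> covers (xs!Suc i) (xs!i))"
proof (induction xs rule: cw.induct)
  case (1 x y r)
  show ?case
  proof
    assume "cw (x # y # r)"
    then show "\<forall>i. Suc i < length (x#y#r) \<longrightarrow> covers ((x#y#r)!i) ((x#y#r)!Suc i) \<or> covers ((x#y#r)!Suc i) ((x#y#r)!i)"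
      using 1 by (auto simp: nth_Cons split: nat.split)
  next
    assume a: "\<forall>i. Suc i < length (x#y#r) \<longrightarrow> covers ((x#y#r)!i) ((x#y#r)!Suc i) \<or> covers ((x#y#r)!Suc i) ((x#y#r)!i)"
    have "covers x y \<or> covers y x" using a[rule_format, of 0] by simp
    moreover have "cw (y#r)" using 1 a by (metis Suc_less_eq length_Cons nth_Cons_Suc)
    ultimately show "cw (x#y#r)" by simp
  qed
qed auto

lemma ups_card: "ups xs = card {k. Suc k < length xs \<and> covers (xs!k) (xs!Suc k)}"
proof (induction xs rule: ups.induct)
  case (1 x y r)
  have "{k. Suc k < length (x#y#r) \<and> covers ((x#y#r)!k) ((x#y#r)!Suc k)}
      = (if covers x y then {0} else {}) \<union> Suc ` {k. Suc k < length (y#r) \<and> covers ((y#r)!k) ((y#r)!Suc k)}"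
  proof (rule set_eqI)
    fix k show "k \<in> {k. Suc k < length (x#y#r) \<and> covers ((x#y#r)!k) ((x#y#r)!Suc k)} \<longleftrightarrow>
      k \<in> (if covers x y then {0} else {}) \<union> Suc ` {k. Suc k < length (y#r) \<and> covers ((y#r)!k) ((y#r)!Suc k)}"
      by (cases k) auto
  qed
  then show ?case using 1 by (auto simp: card_image)
next
  case ("2_1") then show ?case by simp
next
  case ("2_2" v) then show ?case by simp
qed


lemma exists_cover_below:
  fixes x y :: "'a::{finite,order}"
  assumes "y < x" shows "\<exists>z. y \<le> z \<and> covers z x"
proof -
  have "finite {z. y \<le> z \<and> z < x}" "{z. y \<le> z \<and> z < x} \<noteq> {}" using assms by auto
  from finite_has_maximal[OF this] obtain m where m: "y \<le> m" "m < x"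
    "\<forall>b\<in>{z. y \<le> z \<and> z < x}. m \<le> b \<longrightarrow> m = b" by auto
  have "covers m x" unfolding covers_def using m by (metis dual_order.strict_trans1 less_le mem_Collect_eq order.trans)
  with m show ?thesis by auto
qed

lemma exists_cover_above:
  fixes x y :: "'a::{finite,order}"
  assumes "y < x" shows "\<exists>z. covers y z \<and> z \<le> x"
proof -
  have "finite {z. y < z \<and> z \<le> x}" "{z. y < z \<and> z \<le> x} \<noteq> {}" using assms by auto
  from finite_has_minimal[OF this] obtain m where m: "y < m" "m \<le> x"
    "\<forall>b\<in>{z. y < z \<and> z \<le> x}. b \<le> m \<longrightarrow> m = b" by auto
  have "covers y m" unfolding covers_def using m by (metis less_le mem_Collect_eq order.trans order_less_imp_le)
  with m show ?thesis by auto
qed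

lemma down_chain:
  fixes x y :: "'a::{finite,order}"
  shows "y \<le> x \<Longrightarrow> \<exists>L. L \<noteq> [] \<and> hd L = x \<and> last L = y \<and> cw L \<and> ups L = 0"
proof (induction "card {z. y \<le> z \<and> z < x}" arbitrary: x rule: less_induct)
  case less
  show ?case
  proof (cases "y = x")
    case True then show ?thesis by (intro exI[of _ "[x]"]) auto
  next
    case False
    then have "y < x" using less.prems by auto
    then obtain z where z: "y \<le> z" "covers z x" using exists_cover_below by blast
    have "{w. y \<le> w \<and> w < z} \<subset> {w. y \<le> w \<and> w < x}"
      using z covers_less[OF z(2)] by auto
    then have "card {w. y \<le> w \<and> w < z} < card {w. y \<le> w \<and> w < x}"
      by (intro psubset_card_mono) auto
    from less.hyps[OF this z(1)] obtain L where L: "L \<noteq> []" "hd L = z" "last L = y" "cw L" "ups L = 0" by auto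
    obtain r where r: "L = z # r" using L by (cases L) auto
    show ?thesis using L r z covers_asym[OF z(2)]
      by (intro exI[of _ "x # L"]) auto
  qed
qed

lemma up_chain:
  fixes x y :: "'a::{finite,order}"
  shows "y \<le> x \<Longrightarrow> \<exists>L. L \<noteq> [] \<and> hd L = y \<and> last L = x \<and> uc L"
proof (induction "card {z. y < z \<and> z \<le> x}" arbitrary: y rule: less_induct)
  case less
  show ?case
  proof (cases "y = x")
    case True then show ?thesis by (intro exI[of _ "[x]"]) auto
  next
    case False
    then have "y < x" using less.prems by auto
    then obtain z where z: "covers y z" "z \<le> x" using exists_cover_above by blast
    have "{w. z < w \<and> w \<le> x} \<subset> {w. y < w \<and> w \<le> x}"
      using z covers_less[OF z(1)] by auto
    then have "card {w. z < w \<and> w \<le> x} < card {w. y < w \<and> w \<le> x}"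
      by (intro psubset_card_mono) auto
    from less.hyps[OF this z(2)] obtain L where L: "L \<noteq> []" "hd L = z" "last L = x" "uc L" by auto
    obtain r where r: "L = z # r" using L by (cases L) auto
    show ?thesis using L r z
      by (intro exI[of _ "y # L"]) auto
  qed
qed

lemma uc_cw: "uc L \<Longrightarrow> cw L"
  by (induction L rule: uc.induct) auto

lemma uc_sorted: "uc L \<Longrightarrow> sorted_wrt (<) L"
proof (induction L rule: uc.induct)
  case (1 x y r)
  then have "x < y" "sorted_wrt (<) (y # r)" using covers_less by auto
  then show ?case by (auto intro: less_trans)
qed auto

lemma ups0_vw: "ups L = 0 \<Longrightarrow> vw c q L"
  by (induction L rule: ups.induct) (auto split: if_splits)

lemma vw_allpairs: "(\<forall>x\<in>set L. \<forall>y\<in>set L. c x < c y + q) \<Longrightarrow> vw c q L"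
  by (induction L rule: vw.induct) auto

lemma walk_ineq:
  assumes rev: "\<forall>x y. x \<le> y \<longrightarrow> c y \<le> c x"
  shows "cw w \<Longrightarrow> vw c q w \<Longrightarrow> w \<noteq> [] \<Longrightarrow> c (hd w) \<le> c (last w) + ups w * (q - 1)"
proof (induction w rule: cw.induct)
  case (1 x y r)
  then have IH: "c y \<le> c (last (y#r)) + ups (y#r) * (q - 1)" by simp
  show ?case
  proof (cases "covers x y")
    case True
    then have "c x < c y + q" using 1 by simp
    then show ?thesis using IH True by simp
  next
    case False
    then have "covers y x" using 1 by simp
    then have "c x \<le> c y" using rev covers_less by (metis order_less_imp_le)
    then show ?thesis using IH False by simp
  qed
qed auto


locale comb =
  fixes c :: "'a::{finite,order} \<Rightarrow> nat" and s q :: nat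
  assumes rev: "\<And>x y. x \<le> y \<Longrightarrow> c y \<le> c x"
    and bnd: "\<And>x. c x \<le> s" and qpos: "1 \<le> q"
begin

definition good :: "'a list \<Rightarrow> bool" where
  "good w \<longleftrightarrow> w \<noteq> [] \<and> cw w \<and> vw c q w \<and> s < c (hd w) + q \<and> c (last w) < q"

definition goodI :: "'a set \<Rightarrow> bool" where
  "goodI I \<longleftrightarrow> I \<in> poset_ideals \<and> (\<forall>x\<in>I. q \<le> c x) \<and> (\<forall>x. x \<notin> I \<longrightarrow> c x + q \<le> s)
     \<and> (\<forall>x y. x \<le> y \<longrightarrow> x \<in> I \<longrightarrow> y \<notin> I \<longrightarrow> c y + q \<le> c x)"

definition Reach :: "'a set" where
  "Reach = {x. \<exists>w. w \<noteq> [] \<and> cw w \<and> vw c q w \<and> s < c (hd w) + q \<and> last w = x}"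

lemma reach_F0: "s < c x + q \<Longrightarrow> x \<in> Reach"
  unfolding Reach_def by (intro CollectI exI[of _ "[x]"]) auto

lemma reach_down: assumes "x \<in> Reach" "y \<le> x" shows "y \<in> Reach"
proof -
  obtain w where w: "w \<noteq> []" "cw w" "vw c q w" "s < c (hd w) + q" "last w = x"
    using assms(1) unfolding Reach_def by auto
  obtain L where L: "L \<noteq> []" "hd L = x" "last L = y" "cw L" "ups L = 0"
    using down_chain[OF assms(2)] by auto
  have j: "last w = hd L" using w L by simp
  note J = join_props[OF w(1) L(1) j, of c q]
  show ?thesis unfolding Reach_def
    apply (intro CollectI exI[of _ "butlast w @ L"])
    using J w L ups0_vw[OF L(5)] join_hd[OF w(1) L(1) j] by auto
qed

lemma reach_up: assumes "x \<in> Reach" "covers x y" "c x < c y + q" shows "y \<in> Reach"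
proof -
  obtain w where w: "w \<noteq> []" "cw w" "vw c q w" "s < c (hd w) + q" "last w = x"
    using assms(1) unfolding Reach_def by auto
  have L: "[x,y] \<noteq> []" "cw [x,y]" "vw c q [x,y]" using assms by auto
  have j: "last w = hd [x,y]" using w by simp
  note J = join_props[OF w(1) L(1) j, of c q]
  show ?thesis unfolding Reach_def
    apply (intro CollectI exI[of _ "butlast w @ [x,y]"])
    using J w L join_hd[OF w(1) L(1) j] by auto
qed

lemma reach_gap:
  "x \<le> y \<Longrightarrow> x \<in> Reach \<Longrightarrow> y \<notin> Reach \<Longrightarrow> c y + q \<le> c x"
proof (induction "card {z. x < z \<and> z \<le> y}" arbitrary: x rule: less_induct)
  case less
  have "x < y" using less.prems by (metis order_le_imp_less_or_eq)
  then obtain z where z: "covers x z" "z \<le> y" using exists_cover_above by blast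
  show ?case
  proof (cases "z \<in> Reach")
    case False
    then have "\<not> c x < c z + q" using reach_up[OF less.prems(2) z(1)] by auto
    moreover have "c y \<le> c z" using rev[OF z(2)] .
    ultimately show ?thesis by simp
  next
    case True
    have "{w. z < w \<and> w \<le> y} \<subset> {w. x < w \<and> w \<le> y}"
      using z covers_less[OF z(1)] by auto
    then have "card {w. z < w \<and> w \<le> y} < card {w. x < w \<and> w \<le> y}"
      by (intro psubset_card_mono) auto
    from less.hyps[OF this z(2) True less.prems(3)] have "c y + q \<le> c z" .
    moreover have "c z \<le> c x" using rev covers_less[OF z(1)] by (simp add: order_less_imp_le)
    ultimately show ?thesis by simp
  qed
qed

lemma ideal_or_walk: "(\<exists>I. goodI I) \<or> (\<exists>w. good w)"
proof (cases "\<forall>x\<in>Reach. q \<le> c x")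
  case True
  have "goodI Reach" unfolding goodI_def poset_ideals_def
    using True reach_down reach_gap reach_F0 by (auto simp: not_less) (meson not_less reach_F0)
  then show ?thesis by blast
next
  case False
  then obtain x where "x \<in> Reach" "c x < q" by (auto simp: not_le)
  then show ?thesis unfolding Reach_def good_def by auto
qed

end


lemma split_at:
  assumes "k < length xs"
  shows "butlast (take (Suc k) xs) @ drop k xs = xs" "last (take (Suc k) xs) = hd (drop k xs)"
    "take (Suc k) xs \<noteq> []" "drop k xs \<noteq> []" "hd (drop k xs) = xs ! k" "last (take (Suc k) xs) = xs ! k"
    "butlast (take (Suc k) xs) = take k xs"
  using assms by (auto simp: take_Suc_conv_app_nth hd_drop_conv_nth)

lemma split_props:
  assumes "k < length xs"
  shows "cw xs = (cw (take (Suc k) xs) \<and> cw (drop k xs)) \<and> vw c q xs = (vw c q (take (Suc k) xs) \<and> vw c q (drop k xs))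
     \<and> ups xs = ups (take (Suc k) xs) + ups (drop k xs)"
  using join_props[OF split_at(3,4,2)[OF assms], of c q] split_at(1)[OF assms] by simp

context comb begin

lemma shortcut:
  assumes g: "good w" and ij: "i < j" "j < length w"
    and L: "L \<noteq> []" "hd L = w!i" "last L = w!j" "cw L" "ups L = 0"
  shows "good (take i w @ butlast L @ drop j w)"
    "ups (take i w @ butlast L @ drop j w) + ups (take (Suc (j - i)) (drop i w)) = ups w"
    "length (take i w @ butlast L @ drop j w) = i + (length L - 1) + (length w - j)"
proof -
  have il: "i < length w" using ij by simp
  define A where "A = take (Suc i) w"
  define B where "B = drop j w"
  define S where "S = take (Suc (j - i)) (drop i w)"
  have jl: "j - i < length (drop i w)" using ij by simp
  have dS: "drop (j - i) (drop i w) = B" unfolding B_def using ij by simp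
  have hS: "drop i w ! (j - i) = w ! j" using ij by simp
  note sw = split_props[OF il, of c q]
  note sd = split_props[OF jl, of c q]
  have gw: "w \<noteq> []" "cw w" "vw c q w" "s < c (hd w) + q" "c (last w) < q" using g good_def by auto
  have A: "A \<noteq> []" "last A = w!i" "butlast A = take i w" "hd A = hd w"
    using split_at[OF il] unfolding A_def by auto
  have B: "B \<noteq> []" "hd B = w!j" "last B = last w" using ij unfolding B_def by (auto simp: hd_drop_conv_nth)
  have cwA: "cw A" "vw c q A" using sw gw unfolding A_def by auto
  have cwB: "cw B" "vw c q B" "ups (drop i w) = ups S + ups B" using sd sw gw dS unfolding S_def by auto
  have j1: "last A = hd L" using A L by simp
  note JA = join_props[OF A(1) L(1) j1, of c q]
  define AL where "AL = butlast A @ L"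
  have AL: "AL \<noteq> []" "last AL = w!j" "hd AL = hd w" using L A join_hd[OF A(1) L(1) j1] unfolding AL_def by auto
  have j2: "last AL = hd B" using AL B by simp
  note JB = join_props[OF AL(1) B(1) j2, of c q]
  have eq: "butlast AL @ B = take i w @ butlast L @ drop j w"
    unfolding AL_def B_def A(3) using L(1) by (simp add: butlast_append)
  have hd': "hd (butlast AL @ B) = hd w" using join_hd[OF AL(1) B(1) j2] AL by simp
  have last': "last (butlast AL @ B) = last w" using B by simp
  have c1: "cw AL" "vw c q AL" using JA cwA L ups0_vw[OF L(5)] unfolding AL_def by auto
  have c2: "cw (butlast AL @ B)" "vw c q (butlast AL @ B)" using JB c1 cwB by auto
  have ne: "butlast AL @ B \<noteq> []" using B by simp
  show "good (take i w @ butlast L @ drop j w)"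
    unfolding eq[symmetric] good_def using c2 ne hd' last' gw by simp
  show "ups (take i w @ butlast L @ drop j w) + ups (take (Suc (j - i)) (drop i w)) = ups w"
    unfolding eq[symmetric] S_def[symmetric] using JA JB cwB sw L unfolding AL_def A_def by simp
  show "length (take i w @ butlast L @ drop j w) = i + (length L - 1) + (length w - j)"
    using ij by simp
qed

lemma minimal_walk:
  assumes "\<exists>w. good w"
  shows "\<exists>w. good w \<and> (\<forall>w'. good w' \<longrightarrow> ups w \<le> ups w' \<and> (ups w' \<le> ups w \<longrightarrow> length w \<le> length w'))"
proof -
  obtain w0 where "good w0" using assms by auto
  from ex_has_least_nat[of good, OF this, of ups] obtain w1 where
    w1: "good w1" "\<forall>y. good y \<longrightarrow> ups w1 \<le> ups y" by auto
  from ex_has_least_nat[of "\<lambda>w. good w \<and> ups w = ups w1", of w1 length] w1 obtain w where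
    w: "good w" "ups w = ups w1" "\<forall>y. good y \<and> ups y = ups w1 \<longrightarrow> length w \<le> length y" by auto
  show ?thesis using w w1 by (intro exI[of _ w]) (metis le_antisym)
qed

lemma min_props:
  assumes g: "good w"
    and mn: "\<forall>w'. good w' \<longrightarrow> ups w \<le> ups w' \<and> (ups w' \<le> ups w \<longrightarrow> length w \<le> length w')"
  shows "distinct w"
    "\<And>j. 0 < j \<Longrightarrow> j < length w \<Longrightarrow> c (w!j) + q \<le> s"
    "\<And>j. j + 1 < length w \<Longrightarrow> q \<le> c (w!j)"
    "\<And>i k j. i \<le> k \<Longrightarrow> k < j \<Longrightarrow> j < length w \<Longrightarrow> covers (w!k) (w!Suc k) \<Longrightarrow> \<not> w!j \<le> w!i"
proof -
  have gw: "w \<noteq> []" "cw w" "vw c q w" "s < c (hd w) + q" "c (last w) < q" using g good_def by auto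
  show "distinct w"
  proof (rule ccontr)
    assume "\<not> distinct w"
    then obtain i j where ij: "i < j" "j < length w" "w!i = w!j"
      unfolding distinct_conv_nth by (metis linorder_neqE_nat)
    note sc = shortcut[OF g ij(1,2), of "[w!i]"]
    have "good (take i w @ butlast [w!i] @ drop j w)" using sc ij by simp
    moreover have "ups (take i w @ butlast [w!i] @ drop j w) \<le> ups w" using sc ij by simp
    moreover have "length (take i w @ butlast [w!i] @ drop j w) < length w" using sc ij by simp
    ultimately show False using mn by fastforce
  qed
  show "c (w!j) + q \<le> s" if j: "0 < j" "j < length w" for j
  proof (rule ccontr)
    assume na: "\<not> c (w!j) + q \<le> s"
    note sp = split_props[OF j(2), of c q]
    have "good (drop j w)" using sp gw j na unfolding good_def by (auto simp: hd_drop_conv_nth)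
    moreover have "ups (drop j w) \<le> ups w" using sp by simp
    moreover have "length (drop j w) < length w" using j by simp
    ultimately show False using mn by fastforce
  qed
  show "q \<le> c (w!j)" if j: "j + 1 < length w" for j
  proof (rule ccontr)
    assume a: "\<not> q \<le> c (w!j)"
    have jl: "j < length w" using j by simp
    note sp = split_props[OF jl, of c q]
    have "good (take (Suc j) w)" using sp gw j a split_at[OF jl] unfolding good_def by auto
    moreover have "ups (take (Suc j) w) \<le> ups w" using sp by simp
    moreover have "length (take (Suc j) w) < length w" using j by simp
    ultimately show False using mn by fastforce
  qed
  show "\<not> w!j \<le> w!i" if a: "i \<le> k" "k < j" "j < length w" "covers (w!k) (w!Suc k)" for i k j
  proof
    assume le: "w!j \<le> w!i"
    obtain L where L: "L \<noteq> []" "hd L = w!i" "last L = w!j" "cw L" "ups L = 0"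
      using down_chain[OF le] by auto
    have ij: "i < j" using a by simp
    note sc = shortcut[OF g ij a(3) L]
    define S where "S = take (Suc (j - i)) (drop i w)"
    have lS: "length S = Suc (j - i)" using a by (simp add: S_def)
    have n1: "S!(k-i) = w!k" using a unfolding S_def by simp
    have n2: "S!Suc(k-i) = w!Suc k" using a unfolding S_def by (simp add: Suc_diff_le)
    have mem: "k - i \<in> {k. Suc k < length S \<and> covers (S!k) (S!Suc k)}"
      using a lS n1 n2 by simp
    have fin: "finite {k. Suc k < length S \<and> covers (S!k) (S!Suc k)}"
      by (rule finite_subset[of _ "{..<length S}"]) auto
    have "ups S \<noteq> 0" unfolding ups_card using mem fin by (metis card_0_eq empty_iff)
    then have "ups (take i w @ butlast L @ drop j w) < ups w" using sc(2) unfolding S_def by simp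
    then show False using mn sc(1) by fastforce
  qed
qed

end


lemma filter_upt_nth_le:
  assumes "i < length (filter P [0..<t])" "x < t"
  shows "filter P [0..<t] ! i \<le> x \<longleftrightarrow> i < length (filter P [0..<Suc x])"
proof -
  have e: "[0..<t] = [0..<Suc x] @ [Suc x..<t]" using assms(2) upt_add_eq_append[of 0 "Suc x" "t - Suc x"] by simp
  define F1 where "F1 = filter P [0..<Suc x]"
  define F2 where "F2 = filter P [Suc x..<t]"
  have eL: "filter P [0..<t] = F1 @ F2" unfolding F1_def F2_def by (subst e) simp
  show ?thesis
  proof (cases "i < length F1")
    case True
    then have "filter P [0..<t] ! i = F1 ! i" unfolding eL by (simp add: nth_append)
    moreover have "F1 ! i \<in> set F1" using True by simp
    ultimately show ?thesis using True unfolding F1_def by auto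
  next
    case False
    then have "filter P [0..<t] ! i = F2 ! (i - length F1)" unfolding eL by (simp add: nth_append)
    moreover have "i - length F1 < length F2" using assms(1) False unfolding eL by simp
    then have "F2 ! (i - length F1) \<in> set F2" by simp
    ultimately show ?thesis using False unfolding F1_def F2_def by auto
  qed
qed

lemma filter_upt_mem:
  assumes "i < length (filter P [0..<t])"
  shows "P (filter P [0..<t] ! i) \<and> filter P [0..<t] ! i < t"
proof -
  have "filter P [0..<t] ! i \<in> set (filter P [0..<t])" using assms by (rule nth_mem)
  then show ?thesis by (simp only: set_filter set_upt) auto
qed

lemma filter_upt_less:
  assumes "i < j" "j < length (filter P [0..<t])"
  shows "filter P [0..<t] ! i < filter P [0..<t] ! j"
  using sorted_wrt_nth_less[OF sorted_wrt_filter[OF sorted_wrt_upt] assms] .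

lemma filter_upt_mono:
  assumes "i \<le> j" "j < length (filter P [0..<t])"
  shows "filter P [0..<t] ! i \<le> filter P [0..<t] ! j"
  using filter_upt_less[OF _ assms(2)] assms(1) by (cases "i = j") (auto simp: order_less_imp_le)

lemma filter_upt_len_le: "x < t \<Longrightarrow> length (filter P [0..<Suc x]) \<le> length (filter P [0..<t])"
proof -
  assume "x < t"
  then have "[0..<t] = [0..<Suc x] @ [Suc x..<t]" using upt_add_eq_append[of 0 "Suc x" "t - Suc x"] by simp
  then show ?thesis by (metis filter_append le_add1 length_append)
qed

lemma sl_filter: "sorted_list_of_set {j. j < n \<and> P j} = filter P [0..<n]"
proof -
  have e: "{j. j < n \<and> P j} = set (filter P [0..<n])" by auto
  have "card {j. j < n \<and> P j} = length (filter P [0..<n])" unfolding e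
    by (rule distinct_card) simp
  then show ?thesis
    by (intro sorted_list_of_set_unique[THEN iffD1]) (auto intro: sorted_wrt_filter)
qed

lemma max_pos_filter: "max_pos C = filter (loc_max C) [0..<length C]"
  unfolding max_pos_def by (rule sl_filter)

lemma min_pos_filter: "min_pos C = filter (\<lambda>j. 0 < j \<and> loc_min C j) [0..<length C]"
proof -
  have "{j. 0 < j \<and> j < length C \<and> loc_min C j} = {j. j < length C \<and> (0 < j \<and> loc_min C j)}" by auto
  then show ?thesis unfolding min_pos_def by (simp only: sl_filter)
qed

locale zig =
  fixes C :: "'a::order list"
  assumes ne: "C \<noteq> []" and dist: "distinct C"
    and step: "\<And>k. Suc k < length C \<Longrightarrow> covers (C!k) (C!Suc k) \<or> covers (C!Suc k) (C!k)"
    and first: "2 \<le> length C \<Longrightarrow> covers (C!0) (C!1)"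
    and lastup: "2 \<le> length C \<Longrightarrow> covers (C!(length C - 2)) (C!(length C - 1))"
    and NS: "\<And>i k j. i \<le> k \<Longrightarrow> k < j \<Longrightarrow> j < length C \<Longrightarrow> covers (C!k) (C!Suc k) \<Longrightarrow> \<not> C!j \<le> C!i"
begin

abbreviation "t \<equiv> length C"
abbreviation "Pn \<equiv> (\<lambda>j. 0 < j \<and> loc_min C j)"
abbreviation "X p \<equiv> length (filter (loc_max C) [0..<Suc p])"
abbreviation "N p \<equiv> length (filter Pn [0..<Suc p])"

lemma invariant:
  "Suc p < t \<Longrightarrow> (covers (C!p) (C!Suc p) \<longrightarrow> X p = N p) \<and> (covers (C!Suc p) (C!p) \<longrightarrow> X p = N p + 1)"
proof (induction p)
  case 0
  have "\<not> loc_max C 0" "\<not> Pn 0" using 0 unfolding loc_max_def by auto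
  then show ?case using first[of] 0 covers_asym by fastforce
next
  case (Suc p)
  have IH: "(covers (C!p) (C!Suc p) \<longrightarrow> X p = N p) \<and> (covers (C!Suc p) (C!p) \<longrightarrow> X p = N p + 1)"
    using Suc by simp
  have mx: "loc_max C (Suc p) \<longleftrightarrow> covers (C!p) (C!Suc p) \<and> covers (C!Suc (Suc p)) (C!Suc p)"
    using Suc.prems unfolding loc_max_def by auto
  have mn: "Pn (Suc p) \<longleftrightarrow> covers (C!Suc p) (C!p) \<and> covers (C!Suc p) (C!Suc (Suc p))"
    using Suc.prems unfolding loc_min_def by auto
  have s1: "covers (C!p) (C!Suc p) \<or> covers (C!Suc p) (C!p)" using step Suc.prems by simp
  have s2: "covers (C!Suc p) (C!Suc (Suc p)) \<or> covers (C!Suc (Suc p)) (C!Suc p)" using step Suc.prems by simp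
  have XS: "X (Suc p) = X p + (if loc_max C (Suc p) then 1 else 0)" by simp
  have NS': "N (Suc p) = N p + (if Pn (Suc p) then 1 else 0)" by simp
  show ?case
  proof (cases "covers (C!p) (C!Suc p)")
    case u1: True
    then have nd1: "\<not> covers (C!Suc p) (C!p)" using covers_asym by blast
    have Xp: "X p = N p" using IH u1 by simp
    show ?thesis
    proof (cases "covers (C!Suc p) (C!Suc (Suc p))")
      case True
      then have "\<not> covers (C!Suc(Suc p)) (C!Suc p)" using covers_asym by blast
      then show ?thesis using True Xp mx mn nd1 unfolding XS NS' by simp
    next
      case False
      then have d2: "covers (C!Suc(Suc p)) (C!Suc p)" using s2 by simp
      show ?thesis using False d2 Xp mx mn nd1 u1 unfolding XS NS' by simp
    qed
  next
    case d1: False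
    then have u1: "covers (C!Suc p) (C!p)" using s1 by simp
    have Xp: "X p = N p + 1" using IH u1 by simp
    show ?thesis
    proof (cases "covers (C!Suc p) (C!Suc (Suc p))")
      case True
      then have "\<not> covers (C!Suc(Suc p)) (C!Suc p)" using covers_asym by blast
      then show ?thesis using True Xp mx mn d1 u1 unfolding XS NS' by simp
    next
      case False
      then have d2: "covers (C!Suc(Suc p)) (C!Suc p)" using s2 by simp
      show ?thesis using False d2 Xp mx mn d1 u1 unfolding XS NS' by simp
    qed
  qed
qed

lemma block_facts:
  assumes m: "Suc m < length (max_pos C)"
  shows "m < length (min_pos C)" "0 < max_pos C ! m" "max_pos C ! m < min_pos C ! m"
    "min_pos C ! m < max_pos C ! Suc m" "Suc (min_pos C ! m) < t"
    "covers (C!(max_pos C ! m - 1)) (C!(max_pos C ! m))"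
    "covers (C!(min_pos C ! m)) (C!Suc (min_pos C ! m))"
    "max_pos C ! Suc m < t"
proof -
  define Lx where "Lx = max_pos C"
  define Ln where "Ln = min_pos C"
  have Lx: "Lx = filter (loc_max C) [0..<t]" unfolding Lx_def max_pos_filter ..
  have Ln: "Ln = filter Pn [0..<t]" unfolding Ln_def min_pos_filter ..
  define a where "a = Lx ! m"
  define a' where "a' = Lx ! Suc m"
  have m': "m < length Lx" "Suc m < length Lx" using m unfolding Lx_def by auto
  have aa': "a < a'" unfolding a_def a'_def Lx using filter_upt_less m' Lx by simp
  have a't: "a' < t" "loc_max C a'" using filter_upt_mem[of "Suc m" "loc_max C" t] m' unfolding a'_def Lx by auto
  have at: "loc_max C a" using filter_upt_mem[of m "loc_max C" t] m' unfolding a_def Lx by auto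
  have a_int: "0 < a" "Suc a < t" "covers (C!(a-1)) (C!a)" "covers (C!(a+1)) (C!a)"
    using at aa' a't unfolding loc_max_def by auto
  have Xa: "X a = Suc m"
  proof -
    have "Lx ! m \<le> a" unfolding a_def by simp
    then have "m < X a" using filter_upt_nth_le[of m "loc_max C" t a] m' a_int unfolding Lx by simp
    moreover have "\<not> Lx ! Suc m \<le> a" using aa' unfolding a'_def by simp
    then have "\<not> Suc m < X a" using filter_upt_nth_le[of "Suc m" "loc_max C" t a] m' a_int unfolding Lx by simp
    ultimately show ?thesis by simp
  qed
  have Na: "N a = m" using invariant[OF a_int(2)] a_int(4) Xa by simp
  have a'pos: "0 < a'" using aa' by simp
  have up': "covers (C!(a'-1)) (C!a')"
  proof (cases "a' = t - 1")
    case True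
    have t2: "2 \<le> t" using True a'pos by simp
    have e: "a' - 1 = t - 2" using True by simp
    show ?thesis using lastup[OF t2] True e by simp
  next
    case False
    then show ?thesis using a't unfolding loc_max_def by auto
  qed
  have sa': "Suc (a' - 1) < t" using a't a'pos by simp
  have Xa'1: "X (a' - 1) = N (a' - 1)" using invariant[OF sa'] up' a'pos by simp
  have "Lx ! m \<le> a' - 1" using aa' unfolding a_def by simp
  then have "m < X (a' - 1)" using filter_upt_nth_le[of m "loc_max C" t "a' - 1"] m' sa' unfolding Lx by simp
  then have mN: "m < N (a' - 1)" using Xa'1 by simp
  have "N (a' - 1) \<le> length Ln" unfolding Ln by (rule filter_upt_len_le) (use sa' in simp)
  then have mLn: "m < length Ln" using mN by simp
  then show "m < length (min_pos C)" unfolding Ln_def .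
  have "\<not> Ln ! m \<le> a" using filter_upt_nth_le[of m Pn t a] mLn a_int Na unfolding Ln by simp
  then show "max_pos C ! m < min_pos C ! m" unfolding a_def Lx_def Ln_def by simp
  have "Ln ! m \<le> a' - 1" using filter_upt_nth_le[of m Pn t "a' - 1"] mLn sa' mN unfolding Ln by simp
  then show "min_pos C ! m < max_pos C ! Suc m" using a'pos unfolding a'_def Lx_def Ln_def by simp
  have b: "Pn (Ln ! m)" "Ln ! m < t" using filter_upt_mem[of m Pn t] mLn unfolding Ln by auto
  then show "Suc (min_pos C ! m) < t" "covers (C!(min_pos C ! m)) (C!Suc (min_pos C ! m))"
    unfolding Ln_def loc_min_def by auto
  show "0 < max_pos C ! m" using a_int unfolding a_def Lx_def by simp
  show "covers (C!(max_pos C ! m - 1)) (C!(max_pos C ! m))" using a_int unfolding a_def Lx_def by simp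
  show "max_pos C ! Suc m < t" using a't unfolding a'_def Lx_def by simp
qed

lemma max_pos_mono: "i \<le> j \<Longrightarrow> j < length (max_pos C) \<Longrightarrow> max_pos C ! i \<le> max_pos C ! j"
  unfolding max_pos_filter by (rule filter_upt_mono)

lemma cond: "cond_star C"
  unfolding cond_star_def
proof (intro allI impI conjI)
  fix i assume i: "i + 1 < nblocks C"
  then have i': "Suc i < length (max_pos C)" unfolding nblocks_def by simp
  note bi = block_facts[OF i']
  define a where "a = max_pos C ! i"
  define b where "b = min_pos C ! i"
  show "VA C (i + 1) \<inter> (\<Union>m\<le>i. downA C m) = {}"
  proof (rule ccontr)
    assume "VA C (i + 1) \<inter> (\<Union>m\<le>i. downA C m) \<noteq> {}"
    then obtain j m where j: "A_start C (i+1) \<le> j" "j \<le> max_pos C ! (i+1)" and m: "m \<le> i"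
      and le: "C!j \<le> tA C m" unfolding VA_def downA_def by auto
    have jb: "Suc b \<le> j" using j unfolding A_start_def b_def by simp
    have jt: "j < t" using j bi by simp
    have "max_pos C ! m \<le> a" unfolding a_def using max_pos_mono[OF m] i' by simp
    then have "max_pos C ! m \<le> b" using bi unfolding a_def b_def by simp
    from NS[OF this _ jt] jb bi le show False unfolding tA_def b_def by simp
  qed
  show "VD C i \<inter> ((\<Union>m<i. downA C m) \<union> downA_minus_top C i \<union> {tA C i}) = {}"
  proof (rule ccontr)
    assume "VD C i \<inter> ((\<Union>m<i. downA C m) \<union> downA_minus_top C i \<union> {tA C i}) \<noteq> {}"
    then obtain j where j: "a < j" "j \<le> b" and
      cases: "(\<exists>m<i. C!j \<le> tA C m) \<or> C!j \<in> downA_minus_top C i \<or> C!j = tA C i"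
      unfolding VD_def downA_def a_def b_def by auto
    have jt: "j < t" using j bi unfolding b_def by simp
    show False
    proof -
      { fix m assume m: "m < i" "C!j \<le> tA C m"
        have m': "Suc m < length (max_pos C)" using m i' by simp
        note bm = block_facts[OF m']
        have "max_pos C ! Suc m \<le> a" unfolding a_def using max_pos_mono[of "Suc m" i] m i' by simp
        then have k: "min_pos C ! m < j" using bm j by simp
        have "max_pos C ! m \<le> min_pos C ! m" using bm by simp
        from NS[OF this k jt bm(7)] m(2) have False unfolding tA_def by simp }
      moreover
      { assume "C!j \<in> downA_minus_top C i"
        then obtain j' where j': "A_start C i \<le> j'" "j' \<le> a" "C!j' \<noteq> tA C i" "C!j \<le> C!j'"
          unfolding downA_minus_top_def VA_def a_def by auto
        have "j' \<noteq> a" using j' unfolding tA_def a_def by auto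
        then have "j' \<le> a - 1" using j' by simp
        moreover have "a - 1 < j" using j by simp
        moreover have "covers (C!(a-1)) (C!Suc (a-1))" using bi unfolding a_def by simp
        ultimately have False using NS[of j' "a-1" j] jt j' by simp }
      moreover
      { assume "C!j = tA C i"
        then have "C!j = C!a" unfolding tA_def a_def .
        moreover have "a < t" using bi j jt unfolding a_def by simp
        ultimately have "j = a" using nth_eq_iff_index_eq[OF dist jt] by blast
        then have False using j by simp }
      ultimately show False using cases by blast
    qed
  qed
qed

end


lemma sw_distinct: "sorted_wrt (<) (xs::'a::order list) \<Longrightarrow> distinct xs"
  by (induction xs) auto

lemma uc_bounds:
  assumes "uc L" "L \<noteq> []"
  shows "\<And>y. y \<in> set L \<Longrightarrow> hd L \<le> y \<and> y \<le> last L"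
    "\<And>y. y \<in> set (butlast L) \<Longrightarrow> y < last L"
    "\<And>y. y \<in> set (tl L) \<Longrightarrow> hd L < y"
    "sorted_wrt (<) (butlast L)" "sorted_wrt (<) (tl L)" "distinct L"
proof -
  have s: "sorted_wrt (<) L" using uc_sorted[OF assms(1)] .
  have e1: "L = butlast L @ [last L]" using assms(2) by simp
  have e2: "L = hd L # tl L" using assms(2) by simp
  have s1: "sorted_wrt (<) (butlast L @ [last L])" using s e1 by metis
  have s2: "sorted_wrt (<) (hd L # tl L)" using s e2 by metis
  show b: "\<And>y. y \<in> set (butlast L) \<Longrightarrow> y < last L" using s1 by (simp add: sorted_wrt_append)
  show t: "\<And>y. y \<in> set (tl L) \<Longrightarrow> hd L < y" using s2 by simp
  show "sorted_wrt (<) (butlast L)" using s1 by (simp add: sorted_wrt_append)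
  show "sorted_wrt (<) (tl L)" using s2 by simp
  show "distinct L" using s by (rule sw_distinct)
  show "hd L \<le> y \<and> y \<le> last L" if "y \<in> set L" for y
  proof
    show "y \<le> last L" using b that e1 by (metis in_set_butlastD insert_iff list.set(2) order_less_imp_le set_append Un_iff empty_set order_refl singletonD)
    show "hd L \<le> y" using t that e2 by (metis order_less_imp_le order_refl set_ConsD)
  qed
qed


lemma lt_le_False: "(x::'a::order) < y \<Longrightarrow> y \<le> x \<Longrightarrow> False"
  by (simp add: less_le_not_le)

context comb begin

lemma walk_to_path:
  assumes ex: "\<exists>w. good w" and s2: "2 * q \<le> s + 1"
  shows "\<exists>C::'a list. is_maximal_path C \<and> cond_star C \<and> s + 2 \<le> 2 * q + len_star C * (q - 1)"
proof -
  obtain w where g: "good w"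
    and mn: "\<forall>w'. good w' \<longrightarrow> ups w \<le> ups w' \<and> (ups w' \<le> ups w \<longrightarrow> length w \<le> length w')"
    using minimal_walk[OF ex] by blast
  note mp = min_props[OF g mn]
  have gw: "w \<noteq> []" "cw w" "vw c q w" "s < c (hd w) + q" "c (last w) < q" using g good_def by auto
  define x0 where "x0 = hd w"
  define z where "z = last w"
  obtain m where m: "m \<le> x0" "\<And>b. \<not> b < m"
    using finite_has_minimal2[of UNIV x0] by (auto simp: less_le_not_le)
  obtain M where M: "z \<le> M" "\<And>b. \<not> M < b"
    using finite_has_maximal2[of UNIV z] by (auto simp: less_le_not_le)
  obtain P where P: "P \<noteq> []" "hd P = m" "last P = x0" "uc P" using up_chain[OF m(1)] by auto
  obtain E where E: "E \<noteq> []" "hd E = z" "last E = M" "uc E" using up_chain[OF M(1)] by auto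
  note Pb = uc_bounds[OF P(4,1)]
  note Eb = uc_bounds[OF E(4,1)]
  have cx0: "s < c x0 + q" using gw unfolding x0_def by simp
  have cz: "c z < q" using gw unfolding z_def by simp
  have Pc: "s < c y + q" if "y \<in> set P" for y
  proof -
    have "y \<le> x0" using Pb(1)[OF that] P(3) by simp
    then have "c x0 \<le> c y" by (rule rev)
    then show ?thesis using cx0 by simp
  qed
  have Ec: "c y < q" if "y \<in> set E" for y
  proof -
    have "z \<le> y" using Eb(1)[OF that] E(2) by simp
    then have "c y \<le> c z" by (rule rev)
    then show ?thesis using cz by simp
  qed
  have vP: "vw c q P"
  proof (rule vw_allpairs, intro ballI)
    fix x y assume "x \<in> set P" "y \<in> set P"
    then show "c x < c y + q" using Pc[of y] bnd[of x] by linarith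
  qed
  have vE: "vw c q E"
  proof (rule vw_allpairs, intro ballI)
    fix x y assume "x \<in> set E" "y \<in> set E"
    then show "c x < c y + q" using Ec[of x] by linarith
  qed
  have cP: "cw P" "cw E" using P E uc_cw by auto
  define PW where "PW = butlast P @ w"
  have j1: "last P = hd w" using P x0_def by simp
  note J1 = join_props[OF P(1) gw(1) j1, of c q]
  have PW: "PW \<noteq> []" "hd PW = m" "last PW = z" "cw PW" "vw c q PW"
    using J1 join_hd[OF P(1) gw(1) j1] P gw vP cP unfolding PW_def z_def by auto
  have j2: "last PW = hd E" using PW E by simp
  note J2 = join_props[OF PW(1) E(1) j2, of c q]
  define C where "C = butlast P @ w @ tl E"
  have Ceq: "C = butlast PW @ E"
  proof -
    have "E = z # tl E" using E by (cases E) auto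
    then have "butlast w @ E = butlast w @ [last w] @ tl E" unfolding z_def by simp
    also have "\<dots> = w @ tl E" using gw(1) by simp
    finally have "butlast w @ E = w @ tl E" .
    then show ?thesis unfolding C_def PW_def using gw by (simp add: butlast_append)
  qed
  have Cne: "C \<noteq> []" unfolding C_def using gw by simp
  have Ccw: "cw C" and Cvw: "vw c q C" using J2 PW cP vE unfolding Ceq by auto
  have Chd: "hd C = m" using join_hd[OF PW(1) E(1) j2] PW unfolding Ceq by simp
  have Clast: "last C = M" using E unfolding Ceq by simp
  have ups_eq: "len_star C = ups C" unfolding len_star_def ups_card ..
  have ineq: "c (hd C) \<le> c (last C) + ups C * (q - 1)"
    using walk_ineq[of c C q] rev Ccw Cvw Cne by blast
  have cm: "s < c m + q" using Pc P(1,2) by (metis hd_in_set)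
  have cM: "c M < q" using Ec E(1,3) by (metis last_in_set)
  have bound: "s + 2 \<le> 2 * q + len_star C * (q - 1)" using ineq cm cM Chd Clast ups_eq by simp
  have fB: "\<And>y. y \<in> set (butlast P) \<Longrightarrow> y < x0 \<and> s < c y + q"
    using Pb(2) P(3) Pc by (metis in_set_butlastD)
  have fT: "\<And>y. y \<in> set (tl E) \<Longrightarrow> z < y \<and> c y < q"
    using Eb(3) E(2) Ec by (metis list.set_sel(2) E(1))
  have qs: "\<And>y. \<not> (s < c y + q \<and> c y < q)" using s2 by auto
  have dist: "distinct C"
  proof -
    have d1: "distinct (butlast P)" using Pb(6) by (simp add: distinct_butlast)
    have d3: "distinct (tl E)" using Eb(6) by (simp add: distinct_tl)
    have disj1: "set (butlast P) \<inter> set (w @ tl E) = {}"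
    proof (rule ccontr)
      assume "set (butlast P) \<inter> set (w @ tl E) \<noteq> {}"
      then obtain y where y: "y \<in> set (butlast P)" "y \<in> set w \<or> y \<in> set (tl E)" by auto
      show False
      proof (cases "y \<in> set w")
        case True
        then obtain j where j: "j < length w" "w!j = y" by (metis in_set_conv_nth)
        show False
        proof (cases "j = 0")
          case True then show False using fB[OF y(1)] j gw(1) unfolding x0_def by (simp add: hd_conv_nth)
        next
          case False then show False using mp(2)[of j] j fB[OF y(1)] by simp
        qed
      next
        case False then show False using y fB fT qs by blast
      qed
    qed
    have disj2: "set w \<inter> set (tl E) = {}"
    proof (rule ccontr)
      assume "set w \<inter> set (tl E) \<noteq> {}"
      then obtain y where y: "y \<in> set w" "y \<in> set (tl E)" by auto
      then obtain j where j: "j < length w" "w!j = y" by (metis in_set_conv_nth)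
      show False
      proof (cases "j + 1 < length w")
        case True then show False using mp(3)[OF True] j fT[OF y(2)] by simp
      next
        case False
        then have "j = length w - 1" using j(1) by simp
        then have "y = z" using j(2) gw(1) unfolding z_def by (simp add: last_conv_nth)
        then show False using fT[OF y(2)] by simp
      qed
    qed
    show ?thesis unfolding C_def using d1 d3 mp(1) disj1 disj2 by auto
  qed
  have steps: "\<And>k. Suc k < length C \<Longrightarrow> covers (C!k) (C!Suc k) \<or> covers (C!Suc k) (C!k)"
    using Ccw cw_nth by blast
  have C0: "C!0 = m" using Chd Cne by (simp add: hd_conv_nth)
  have Cl: "C!(length C - 1) = M" using Clast Cne by (simp add: last_conv_nth)
  have first: "covers (C!0) (C!1)" if "2 \<le> length C"
  proof -
    have "covers (C!0) (C!Suc 0) \<or> covers (C!Suc 0) (C!0)" using steps[of 0] that by simp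
    moreover have "\<not> covers (C!Suc 0) (C!0)" using m(2) C0 covers_less by blast
    ultimately show ?thesis by simp
  qed
  have lastup: "covers (C!(length C - 2)) (C!(length C - 1))" if "2 \<le> length C"
  proof -
    have e: "Suc (length C - 2) = length C - 1" using that by simp
    have "covers (C!(length C - 2)) (C!(length C - 1)) \<or> covers (C!(length C - 1)) (C!(length C - 2))"
      using steps[of "length C - 2"] that e by simp
    moreover have "\<not> covers (C!(length C - 1)) (C!(length C - 2))" using M(2) Cl covers_less by blast
    ultimately show ?thesis by simp
  qed
  define b where "b = length (butlast P)"
  define n where "n = length w"
  have nth1: "\<And>k. k < b \<Longrightarrow> C!k = butlast P ! k" unfolding C_def b_def by (simp add: nth_append)
  have nth2: "C!k = w ! (k - b)" if "b \<le> k" "k < b + n" for k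
  proof -
    have "C!k = (w @ tl E) ! (k - b)" using that(1) unfolding C_def b_def by (simp add: nth_append)
    also have "\<dots> = w!(k-b)" using that unfolding n_def by (auto simp: nth_append)
    finally show ?thesis .
  qed
  have nth3: "C!k = tl E ! (k - b - n)" if "b + n \<le> k" for k
  proof -
    have "C!k = (w @ tl E) ! (k - b)" using that unfolding C_def b_def by (simp add: nth_append)
    also have "\<dots> = tl E ! (k - b - n)" using that unfolding n_def by (auto simp: nth_append)
    finally show ?thesis .
  qed
  have lenC: "length C = b + n + length (tl E)" unfolding C_def b_def n_def by simp
  have inB: "\<And>k. k < b \<Longrightarrow> C!k \<in> set (butlast P)" using nth1 unfolding b_def by simp
  have inT: "\<And>k. b + n \<le> k \<Longrightarrow> k < length C \<Longrightarrow> C!k \<in> set (tl E)" using nth3 lenC by simp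
  have NS: "\<not> C!j \<le> C!i" if a: "i \<le> k" "k < j" "j < length C" "covers (C!k) (C!Suc k)" for i k j
  proof
    assume le: "C!j \<le> C!i"
    have cij: "c (C!i) \<le> c (C!j)" using rev[OF le] .
    show False
    proof (cases "j < b")
      case True
      have ij: "i < j" "j < length (butlast P)" using True a unfolding b_def by simp_all
      have "butlast P ! i < butlast P ! j" using sorted_wrt_nth_less[OF Pb(4) ij] .
      then have "C!i < C!j" using nth1[of i] nth1[of j] ij unfolding b_def by simp
      then show False using le by (rule lt_le_False)
    next
      case jb: False
      show False
      proof (cases "j < b + n")
        case jn: True
        show False
        proof (cases "i < b")
          case ib: True
          have fi: "C!i < x0" "s < c (C!i) + q" using fB[OF inB[OF ib]] by auto
          show False
          proof (cases "j = b")
            case True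
            then have "C!j = x0" using nth2[of j] jn gw(1) unfolding x0_def by (simp add: hd_conv_nth)
            then show False using fi(1) le by (auto intro: lt_le_False)
          next
            case False
            then have "c (w!(j-b)) + q \<le> s" using mp(2)[of "j - b"] jb jn unfolding n_def by simp
            then show False using nth2[of j] jb jn fi cij by simp
          qed
        next
          case ib: False
          have "covers (w!(k-b)) (w!Suc (k-b))" using a nth2[of k] nth2[of "Suc k"] ib jn
            by (simp add: Suc_diff_le)
          moreover have "w!(j-b) \<le> w!(i-b)" using le nth2[of i] nth2[of j] ib jn a by simp
          ultimately show False using mp(4)[of "i-b" "k-b" "j-b"] a ib jn unfolding n_def by simp
        qed
      next
        case jn: False
        have fj: "z < C!j" "c (C!j) < q" using fT[OF inT] jn a by auto
        show False
        proof (cases "i < b")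
          case True
          have "s < c (C!j) + q" using fB[OF inB[OF True]] cij by auto
          then show False using fj qs by blast
        next
          case ib: False
          show False
          proof (cases "i < b + n")
            case True
            have Ci: "C!i = w!(i-b)" using nth2 ib True by simp
            show False
            proof (cases "i - b + 1 < length w")
              case True
              then show False using mp(3)[OF True] Ci cij fj by simp
            next
              case False
              then have "i - b = length w - 1" using True ib unfolding n_def by linarith
              then have "C!i = z" using Ci gw(1) unfolding z_def by (simp add: last_conv_nth)
              then show False using fj(1) le by (auto intro: lt_le_False)
            qed
          next
            case False
            have "tl E ! (i - b - n) < tl E ! (j - b - n)"
              using sorted_wrt_nth_less[OF Eb(5)] a False lenC by simp
            then have "C!i < C!j" using nth3[of i] nth3[of j] False a by simp
            then show False using le by (rule lt_le_False)
          qed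
        qed
      qed
    qed
  qed
  interpret Z: zig C
    using Cne dist steps first lastup NS by unfold_locales auto
  have "cond_star C" by (rule Z.cond)
  moreover have "is_maximal_path C"
    unfolding is_maximal_path_def is_path_def
    using Cne dist Chd m(2) steps lastup Clast M(2) by auto
  ultimately show ?thesis using bound by blast
qed

end


definition mmono :: "nat \<Rightarrow> ('a::finite \<Rightarrow> nat) \<Rightarrow> ('a option \<Rightarrow>\<^sub>0 nat)" where
  "mmono s c = Poly_Mapping.single None s + (\<Sum>p\<in>UNIV. Poly_Mapping.single (Some p) (c p))"

lemma lookup_mono_None [simp]: "Poly_Mapping.lookup (mmono s c) None = s"
  by (simp add: mmono_def lookup_add lookup_sum lookup_single when_def)

lemma lookup_mono_Some [simp]: "Poly_Mapping.lookup (mmono s c) (Some x) = c x"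
proof -
  have "(\<Sum>p\<in>UNIV. Poly_Mapping.lookup (Poly_Mapping.single (Some p) (c p)) (Some x)) = (\<Sum>p\<in>UNIV. if p = x then c p else 0)"
    by (rule sum.cong) (auto simp: lookup_single when_def)
  also have "\<dots> = c x" by simp
  finally show ?thesis by (simp add: mmono_def lookup_add lookup_sum lookup_single when_def)
qed

lemma mono_ext: "Poly_Mapping.lookup M None = s \<Longrightarrow> (\<And>p. Poly_Mapping.lookup M (Some p) = c p) \<Longrightarrow> M = mmono s c"
  by (rule poly_mapping_eqI) (case_tac k; simp)

lemma mono_of: "M = mmono (Poly_Mapping.lookup M None) (\<lambda>p. Poly_Mapping.lookup M (Some p))"
  by (rule mono_ext) auto

lemma mono_add: "mmono s c + mmono s' c' = mmono (s + s') (\<lambda>p. c p + c' p)"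
  by (rule mono_ext) (auto simp: lookup_add)

lemma hibi_gen_mono: "hibi_gen I = Poly_Mapping.single (mmono 1 (\<lambda>p. if p \<in> I then 1 else 0)) (1::'k::field)"
proof -
  define M :: "'a option \<Rightarrow>\<^sub>0 nat" where "M = Poly_Mapping.single None 1 + (\<Sum>p\<in>I. Poly_Mapping.single (Some p) 1)"
  have "M = mmono 1 (\<lambda>p. if p \<in> I then 1 else 0)"
  proof (rule mono_ext)
    show "Poly_Mapping.lookup M None = 1" unfolding M_def by (simp add: lookup_add lookup_sum lookup_single when_def)
    fix x
    have fin: "finite I" by simp
    have "(\<Sum>p\<in>I. Poly_Mapping.lookup (Poly_Mapping.single (Some p) (1::nat)) (Some x)) = (\<Sum>p\<in>I. if p = x then 1 else 0)"
      by (rule sum.cong) (auto simp: lookup_single when_def)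
    also have "\<dots> = (if x \<in> I then 1 else 0)" using fin by (simp add: sum.delta')
    finally show "Poly_Mapping.lookup M (Some x) = (if x \<in> I then 1 else 0)"
      unfolding M_def by (simp add: lookup_add lookup_sum lookup_single when_def)
  qed
  then show ?thesis unfolding hibi_gen_def M_def by simp
qed

definition valid :: "nat \<Rightarrow> ('a::order \<Rightarrow> nat) \<Rightarrow> bool" where
  "valid s c \<longleftrightarrow> (\<forall>x y. x \<le> y \<longrightarrow> c y \<le> c x) \<and> (\<forall>x. c x \<le> s)"

definition okM :: "nat \<Rightarrow> ('a::order option \<Rightarrow>\<^sub>0 nat) \<Rightarrow> bool" where
  "okM n M \<longleftrightarrow> valid (Poly_Mapping.lookup M None) (\<lambda>p. Poly_Mapping.lookup M (Some p)) \<and> n \<le> Poly_Mapping.lookup M None"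

definition VS :: "nat \<Rightarrow> ('a::{finite,order}, 'k::field) hpoly set" where
  "VS n = {f. \<forall>M \<in> Poly_Mapping.keys f. okM n M}"

lemma okM_mono: "okM m M \<Longrightarrow> n \<le> m \<Longrightarrow> okM n M"
  unfolding okM_def by simp

lemma okM_add: assumes "okM a A" "okM b B" shows "okM (a + b) (A + B)"
proof -
  have "valid (Poly_Mapping.lookup A None) (\<lambda>p. Poly_Mapping.lookup A (Some p))"
    "valid (Poly_Mapping.lookup B None) (\<lambda>p. Poly_Mapping.lookup B (Some p))"
    "a \<le> Poly_Mapping.lookup A None" "b \<le> Poly_Mapping.lookup B None" using assms unfolding okM_def by auto
  then show ?thesis unfolding okM_def valid_def lookup_add by (auto intro: add_mono)
qed

lemma VS_add: assumes "f \<in> VS n" "g \<in> VS n" shows "f + g \<in> VS n"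
  using assms keys_add[of f g] unfolding VS_def by blast

lemma VS_zero: "0 \<in> VS n" unfolding VS_def by simp

lemma VS_mono: assumes "n \<le> m" "f \<in> VS m" shows "f \<in> VS n"
  using assms okM_mono unfolding VS_def by blast

lemma VS_mult: assumes "f \<in> VS a" "g \<in> VS b" shows "f * g \<in> VS (a + b)"
  unfolding VS_def
proof (rule CollectI, rule ballI)
  fix M assume "M \<in> Poly_Mapping.keys (f * g)"
  then obtain A B where M: "M = A + B" "A \<in> Poly_Mapping.keys f" "B \<in> Poly_Mapping.keys g"
    using keys_mult by blast
  have "okM a A" "okM b B" using assms M unfolding VS_def by auto
  then show "okM (a + b) M" unfolding M(1) by (rule okM_add)
qed

lemma VS_const: "Poly_Mapping.single 0 c \<in> VS 0"
  unfolding VS_def okM_def valid_def by simp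

lemma VS_gen: "I \<in> poset_ideals \<Longrightarrow> hibi_gen I \<in> VS 1"
  unfolding VS_def okM_def valid_def hibi_gen_mono poset_ideals_def by auto

lemma hibi_ring_VS: "f \<in> hibi_ring \<Longrightarrow> f \<in> VS 0"
proof (induction rule: hibi_ring.induct)
  case (const c) then show ?case by (rule VS_const)
next
  case (gen I) then show ?case using VS_gen VS_mono by blast
next
  case (add f g) then show ?case using VS_add by blast
next
  case (mult f g) then show ?case using VS_mult by fastforce
qed

lemma R_ideal_VS: assumes "S \<subseteq> VS n" shows "f \<in> R_ideal S \<Longrightarrow> f \<in> VS n"
proof (induction rule: R_ideal.induct)
  case zero then show ?case by (rule VS_zero)
next
  case (smult r s) then show ?case using VS_mult[OF hibi_ring_VS[OF smult(1)], of s n] assms by auto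
next
  case (add f g) then show ?case using VS_add by blast
qed

lemma hibi_max_VS: "hibi_max \<subseteq> VS 1"
  unfolding hibi_max_def using R_ideal_VS[of "hibi_gen ` poset_ideals" 1] VS_gen by blast

lemma prod_list_VS: "set xs \<subseteq> VS 1 \<Longrightarrow> prod_list xs \<in> VS (length xs)"
proof (induction xs)
  case Nil then show ?case using VS_const[of 1] by simp
next
  case (Cons x xs) then show ?case using VS_mult[of x 1 "prod_list xs" "length xs"] by simp
qed

lemma max_pow_VS: "max_pow r \<subseteq> VS r"
  unfolding max_pow_def
  by (rule subsetI, rule R_ideal_VS[of _ r]) (use prod_list_VS hibi_max_VS in auto)

lemma power_VS: "x \<in> VS 1 \<Longrightarrow> x ^ n \<in> VS n"
proof (induction n)
  case 0 then show ?case using VS_const[of 1] by simp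
next
  case (Suc n) then show ?case using VS_mult[of x 1 "x^n" n] by simp
qed

lemma max_frob_VS: "1 \<le> q \<Longrightarrow> max_frob q \<subseteq> (VS 1 :: ('a::{finite,order},'k::field) hpoly set)"
  unfolding max_frob_def
proof (rule subsetI, rule R_ideal_VS[of "{x ^ q |x. x \<in> hibi_max}" 1])
  assume q: "1 \<le> q"
  show "{x ^ q |x. x \<in> hibi_max} \<subseteq> (VS 1 :: ('a,'k) hpoly set)"
  proof
    fix y :: "('a,'k) hpoly" assume "y \<in> {x ^ q |x. x \<in> hibi_max}"
    then obtain x :: "('a,'k) hpoly" where x: "y = x ^ q" "x \<in> hibi_max" by auto
    have "x ^ q \<in> VS q" using power_VS x(2) hibi_max_VS by blast
    then show "y \<in> VS 1" using VS_mono[OF q] x(1) by simp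
  qed
qed

lemma one_not_VS: "(1 :: ('a::{finite,order}, 'k::field) hpoly) \<notin> VS 1"
  unfolding VS_def okM_def by simp

lemma one_max_pow: "(1 :: ('a::{finite,order}, 'k::field) hpoly) \<in> max_pow 0"
proof -
  have "(1::('a, 'k) hpoly) \<in> hibi_ring" using hibi_ring.const[of 1] by simp
  moreover have "(1::('a, 'k) hpoly) \<in> {prod_list xs | xs. length xs = 0 \<and> set xs \<subseteq> hibi_max}"
    by (intro CollectI exI[of _ "[]"]) simp
  ultimately show ?thesis unfolding max_pow_def using R_ideal.smult by fastforce
qed

lemma R_ideal_mult: "f \<in> R_ideal S \<Longrightarrow> r \<in> hibi_ring \<Longrightarrow> r * f \<in> R_ideal S"
proof (induction rule: R_ideal.induct)
  case zero then show ?case by (simp add: R_ideal.zero)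
next
  case (smult r' s)
  have "r * r' \<in> hibi_ring" using hibi_ring.mult smult by blast
  then have "(r * r') * s \<in> R_ideal S" using R_ideal.smult smult by blast
  then show ?case by (simp add: mult.assoc)
next
  case (add f g)
  have "r * f \<in> R_ideal S" "r * g \<in> R_ideal S" using add by auto
  then have "r * f + r * g \<in> R_ideal S" by (rule R_ideal.add)
  then show ?case by (simp add: distrib_left)
qed

lemma single_mult1: "Poly_Mapping.single (A + B) (1::'k::field) = Poly_Mapping.single A 1 * Poly_Mapping.single B 1"
  by (simp add: mult_single)

lemma mono_in_ring:
  fixes c :: "'a::{finite,order} \<Rightarrow> nat"
  shows "valid s c \<Longrightarrow> (Poly_Mapping.single (mmono s c) (1::'k::field) :: ('a,'k) hpoly) \<in> hibi_ring"
proof (induction s arbitrary: c)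
  case 0
  then have z: "c x = 0" for x unfolding valid_def by (metis le_zero_eq)
  have "0 = mmono 0 c" by (rule mono_ext) (auto simp: z)
  then have "mmono 0 c = 0" by simp
  then show ?case using hibi_ring.const[of 1] by simp
next
  case (Suc n)
  define I where "I = {x. 1 \<le> c x}"
  define c' where "c' = (\<lambda>x. c x - (if x \<in> I then 1 else 0))"
  have r: "\<forall>x y. x \<le> y \<longrightarrow> c y \<le> c x" and b: "\<forall>x. c x \<le> Suc n" using Suc.prems unfolding valid_def by auto
  have v1: "c' y \<le> c' x" if "x \<le> y" for x y
    using r[rule_format, OF that] unfolding c'_def I_def by auto
  have v2: "c' x \<le> n" for x
    using b[rule_format, of x] unfolding c'_def I_def by auto
  have v': "valid n c'" unfolding valid_def using v1 v2 by auto
  have I: "I \<in> poset_ideals" unfolding poset_ideals_def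
  proof (intro CollectI allI impI)
    fix x y assume a: "y \<in> I" "x \<le> y"
    have "c y \<le> c x" using r a(2) by blast
    then show "x \<in> I" using a(1) unfolding I_def by simp
  qed
  have eq: "mmono (Suc n) c = mmono 1 (\<lambda>p. if p \<in> I then 1 else 0) + mmono n c'"
    unfolding mono_add by (rule mono_ext) (auto simp: c'_def I_def)
  have m: "hibi_gen I * Poly_Mapping.single (mmono n c') (1::'k) \<in> hibi_ring"
    by (rule hibi_ring.mult[OF hibi_ring.gen[OF I] Suc.IH[OF v']])
  show ?case unfolding eq single_mult1 using m unfolding hibi_gen_mono .
qed

lemma gen_power: "(Poly_Mapping.single (mmono 1 d) (1::'k::field)) ^ q = Poly_Mapping.single (mmono q (\<lambda>p. q * d p)) 1"
proof (induction q)
  case 0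
  have "0 = mmono 0 (\<lambda>p. 0 * d p)" by (rule mono_ext) auto
  then show ?case by (metis power_0 single_one)
next
  case (Suc q)
  have "mmono 1 d + mmono q (\<lambda>p. q * d p) = mmono (Suc q) (\<lambda>p. Suc q * d p)"
    unfolding mono_add by (rule mono_ext) auto
  have "Poly_Mapping.single (mmono 1 d) (1::'k) ^ Suc q = Poly_Mapping.single (mmono 1 d) 1 * Poly_Mapping.single (mmono q (\<lambda>p. q * d p)) 1"
    by (simp only: power_Suc Suc.IH)
  also have "\<dots> = Poly_Mapping.single (mmono 1 d + mmono q (\<lambda>p. q * d p)) 1" by (simp add: mult_single)
  finally show ?case using \<open>mmono 1 d + mmono q (\<lambda>p. q * d p) = mmono (Suc q) (\<lambda>p. Suc q * d p)\<close> by simp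
qed


context comb begin
lemma ideal_exists:
  assumes big: "(R + 2) * (q - 1) < s"
    and rk: "\<And>C::'a list. is_maximal_path C \<Longrightarrow> cond_star C \<Longrightarrow> len_star C \<le> R"
  shows "\<exists>I. goodI I"
proof (rule ccontr)
  assume no: "\<not> (\<exists>I. goodI I)"
  then have ex: "\<exists>w. good w" using ideal_or_walk by blast
  have e1: "(R + 2) * (q - 1) = R * (q - 1) + 2 * (q - 1)" by (rule add_mult_distrib)
  have s2: "2 * q \<le> s + 1" using big qpos unfolding e1 by linarith
  obtain C :: "'a list" where C: "is_maximal_path C" "cond_star C" "s + 2 \<le> 2*q + len_star C * (q-1)"
    using walk_to_path[OF ex s2] by blast
  have "len_star C * (q-1) \<le> R * (q-1)" using rk[OF C(1,2)] by (rule mult_le_mono1)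
  then show False using C(3) big qpos unfolding e1 by linarith
qed
end

lemma frob_mem:
  fixes c :: "'a::{finite,order} \<Rightarrow> nat"
  assumes v: "valid s c" and q: "1 \<le> q" and big: "(R+2)*(q-1) < s"
    and rk: "\<And>C::'a list. is_maximal_path C \<Longrightarrow> cond_star C \<Longrightarrow> len_star C \<le> R"
  shows "(Poly_Mapping.single (mmono s c) (1::'k::field) :: ('a,'k) hpoly) \<in> max_frob q"
proof -
  have r: "\<And>x y. x \<le> y \<Longrightarrow> c y \<le> c x" and b: "\<And>x. c x \<le> s" using v unfolding valid_def by auto
  interpret comb c s q using r b q by unfold_locales auto
  obtain I where I: "goodI I" using ideal_exists[OF big rk] by blast
  have I1: "I \<in> poset_ideals" "\<And>x. x \<in> I \<Longrightarrow> q \<le> c x" "\<And>x. x \<notin> I \<Longrightarrow> c x + q \<le> s"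
     "\<And>x y. x \<le> y \<Longrightarrow> x \<in> I \<Longrightarrow> y \<notin> I \<Longrightarrow> c y + q \<le> c x" using I unfolding goodI_def by auto
  have "q - 1 \<le> (R+2)*(q-1)" by simp
  then have sq: "q \<le> s" using big q by linarith
  define c' where "c' = (\<lambda>x. c x - (if x \<in> I then q else 0))"
  have v1: "c' y \<le> c' x" if xy: "x \<le> y" for x y
  proof (cases "x \<in> I")
    case True
    show ?thesis
    proof (cases "y \<in> I")
      case True
      then show ?thesis using r[OF xy] \<open>x \<in> I\<close> unfolding c'_def by simp
    next
      case False
      then show ?thesis using I1(4)[OF xy \<open>x \<in> I\<close> False] \<open>x \<in> I\<close> unfolding c'_def by simp
    qed
  next
    case False
    then have "y \<notin> I" using I1(1) xy unfolding poset_ideals_def by blast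
    then show ?thesis using r[OF xy] False unfolding c'_def by simp
  qed
  have v2: "c' x \<le> s - q" for x
    using b[of x] I1(3)[of x] unfolding c'_def by (cases "x \<in> I") auto
  have v': "valid (s - q) c'" unfolding valid_def using v1 v2 by auto
  have eq: "mmono s c = mmono (s - q) c' + mmono q (\<lambda>p. q * (if p \<in> I then 1 else 0))"
    unfolding mono_add
  proof (rule mono_ext)
    show "Poly_Mapping.lookup (mmono s c) None = s - q + q" using sq by simp
    fix p show "Poly_Mapping.lookup (mmono s c) (Some p) = c' p + q * (if p \<in> I then 1 else 0)"
      using I1(2)[of p] unfolding c'_def by (cases "p \<in> I") auto
  qed
  have gI: "hibi_gen I \<in> (hibi_max :: ('a,'k) hpoly set)"
  proof -
    have "(1::('a,'k) hpoly) \<in> hibi_ring" using hibi_ring.const[of 1] by simp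
    then have "1 * hibi_gen I \<in> (hibi_max :: ('a,'k) hpoly set)"
      unfolding hibi_max_def using I1(1) by (intro R_ideal.smult) auto
    then show ?thesis by simp
  qed
  have gp: "hibi_gen I ^ q = (Poly_Mapping.single (mmono q (\<lambda>p. q * (if p \<in> I then 1 else 0))) 1 :: ('a,'k) hpoly)"
    unfolding hibi_gen_mono by (rule gen_power)
  have rr: "(Poly_Mapping.single (mmono (s - q) c') 1 :: ('a,'k) hpoly) \<in> hibi_ring" using mono_in_ring[OF v'] .
  have mem: "Poly_Mapping.single (mmono (s - q) c') 1 * hibi_gen I ^ q \<in> (max_frob q :: ('a,'k) hpoly set)"
    unfolding max_frob_def using gI by (intro R_ideal.smult[OF rr]) auto
  show ?thesis using mem unfolding gp eq single_mult1 .
qed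

lemma keys_induct:
  fixes f :: "('a::{finite,order},'k::field) hpoly"
  shows "(\<And>M. M \<in> Poly_Mapping.keys f \<Longrightarrow> Poly_Mapping.single M 1 \<in> R_ideal S) \<Longrightarrow> f \<in> R_ideal S"
proof (induction "card (Poly_Mapping.keys f)" arbitrary: f)
  case 0
  then have "f = 0" by simp
  then show ?case by (simp add: R_ideal.zero)
next
  case (Suc n)
  then have "Poly_Mapping.keys f \<noteq> {}" by auto
  then obtain M where M: "M \<in> Poly_Mapping.keys f" by blast
  define g where "g = f - Poly_Mapping.single M (Poly_Mapping.lookup f M)"
  have kg: "Poly_Mapping.keys g = Poly_Mapping.keys f - {M}"
  proof (rule set_eqI)
    fix x show "x \<in> Poly_Mapping.keys g \<longleftrightarrow> x \<in> Poly_Mapping.keys f - {M}"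
      unfolding g_def in_keys_iff lookup_minus lookup_single by (cases "x = M") (auto simp: when_def in_keys_iff)
  qed
  have "card (Poly_Mapping.keys g) = n" using Suc.hyps(2) M unfolding kg by simp
  moreover have "\<And>M'. M' \<in> Poly_Mapping.keys g \<Longrightarrow> Poly_Mapping.single M' 1 \<in> R_ideal S"
    using Suc.prems unfolding kg by blast
  ultimately have gS: "g \<in> R_ideal S" using Suc.hyps(1) by blast
  have "Poly_Mapping.single 0 (Poly_Mapping.lookup f M) * Poly_Mapping.single M 1 \<in> R_ideal S"
    using R_ideal_mult[OF Suc.prems[OF M] hibi_ring.const] .
  then have "Poly_Mapping.single M (Poly_Mapping.lookup f M) \<in> R_ideal S" by (simp add: mult_single)
  then have "Poly_Mapping.single M (Poly_Mapping.lookup f M) + g \<in> R_ideal S" using gS by (rule R_ideal.add)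
  then show ?case unfolding g_def by simp
qed

lemma pow_sub:
  assumes q: "1 \<le> q" and big: "(R+2)*(q-1) < r"
    and rk: "\<And>C::'a list. is_maximal_path C \<Longrightarrow> cond_star C \<Longrightarrow> len_star C \<le> R"
  shows "max_pow r \<subseteq> (max_frob q :: ('a::{finite,order},'k::field) hpoly set)"
proof
  fix f :: "('a,'k) hpoly" assume "f \<in> max_pow r"
  then have f: "f \<in> VS r" using max_pow_VS by blast
  have all: "(Poly_Mapping.single M 1 :: ('a,'k) hpoly) \<in> max_frob q" if M: "M \<in> Poly_Mapping.keys f" for M
  proof -
    have ok: "okM r M" using f M unfolding VS_def by auto
    then have v: "valid (Poly_Mapping.lookup M None) (\<lambda>p. Poly_Mapping.lookup M (Some p))"
      and l: "r \<le> Poly_Mapping.lookup M None" unfolding okM_def by auto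
    have fm: "(Poly_Mapping.single (mmono (Poly_Mapping.lookup M None) (\<lambda>p. Poly_Mapping.lookup M (Some p))) (1::'k) :: ('a,'k) hpoly) \<in> max_frob q"
      using frob_mem[OF v q _ rk] big l by simp
    have e: "mmono (Poly_Mapping.lookup M None) (\<lambda>p. Poly_Mapping.lookup M (Some p)) = M"
      by (rule mono_of[symmetric])
    show ?thesis using fm unfolding e .
  qed
  show "f \<in> max_frob q" unfolding max_frob_def
    by (rule keys_induct) (use all in \<open>simp add: max_frob_def\<close>)
qed

lemma nu_bound:
  assumes q: "1 \<le> q"
    and rk: "\<And>C::'a list. is_maximal_path C \<Longrightarrow> cond_star C \<Longrightarrow> len_star C \<le> R"
  shows "hibi_nu TYPE('a::{finite,order}) TYPE('k::field) q \<le> (R+2)*(q-1)"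
proof -
  define A where "A = {r. \<not> (max_pow r \<subseteq> (max_frob q :: ('a, 'k) hpoly set))}"
  have sub: "A \<subseteq> {..(R+2)*(q-1)}"
  proof
    fix r assume "r \<in> A"
    then show "r \<in> {..(R+2)*(q-1)}" using pow_sub[OF q _ rk, of r] unfolding A_def by (auto simp: not_le)
  qed
  have "(1::('a,'k) hpoly) \<in> max_pow 0" by (rule one_max_pow)
  moreover have "(1::('a,'k) hpoly) \<notin> max_frob q" using max_frob_VS[OF q] one_not_VS by blast
  ultimately have "0 \<in> A" unfolding A_def by blast
  then have "Max A \<le> (R+2)*(q-1)" using sub finite_subset[OF sub] by (intro Max.boundedI) auto
  then show ?thesis unfolding hibi_nu_def A_def .
qed

lemma rank_bound:
  assumes "is_maximal_path (C::'a::{finite,order} list)" "cond_star C"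
  shows "len_star C \<le> rank_star TYPE('a)"
proof -
  define A where "A = {len_star (D :: 'a list) | D. is_maximal_path D \<and> cond_star D}"
  have "A \<subseteq> {..card (UNIV :: 'a set)}"
  proof
    fix x assume "x \<in> A"
    then obtain D :: "'a list" where D: "x = len_star D" "is_maximal_path D" by (auto simp: A_def)
    have "len_star D \<le> card {..<length D}" unfolding len_star_def by (rule card_mono) auto
    also have "\<dots> = card (set D)" using D(2) unfolding is_maximal_path_def is_path_def
      by (simp add: distinct_card)
    also have "\<dots> \<le> card (UNIV :: 'a set)" by (rule card_mono) auto
    finally show "x \<in> {..card (UNIV :: 'a set)}" using D by simp
  qed
  then have "finite A" by (rule finite_subset) simp
  moreover have "len_star C \<in> A" using assms unfolding A_def by blast
  ultimately show ?thesis unfolding rank_star_def A_def[symmetric] by simp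
qed

theorem corollary2p9:
  fixes p :: nat
  assumes "CHAR('k::field) = p" and "p > 0"
  shows "limsup (\<lambda>e. ereal (real (hibi_nu TYPE('a::{finite,order}) TYPE('k) (p ^ e)) / real (p ^ e)))
           \<le> ereal (real (rank_star TYPE('a)) + 2)"
proof -
  define R where "R = rank_star TYPE('a)"
  have rk: "\<And>C::'a list. is_maximal_path C \<Longrightarrow> cond_star C \<Longrightarrow> len_star C \<le> R"
    unfolding R_def by (rule rank_bound)
  have "ereal (real (hibi_nu TYPE('a) TYPE('k) (p ^ e)) / real (p ^ e)) \<le> ereal (real R + 2)" for e
  proof -
    define q where "q = p ^ e"
    have q: "1 \<le> q" using assms(2) unfolding q_def by simp
    have nb: "hibi_nu TYPE('a) TYPE('k) q \<le> (R+2)*(q-1)" by (rule nu_bound[OF q rk])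
    also have "\<dots> \<le> (R+2)*q" by (rule mult_le_mono2) simp
    finally have "real (hibi_nu TYPE('a) TYPE('k) q) \<le> (real R + 2) * real q"
      by (metis of_nat_add of_nat_le_iff of_nat_mult of_nat_numeral)
    then have "real (hibi_nu TYPE('a) TYPE('k) q) / real q \<le> real R + 2"
      using q by (simp add: divide_le_eq)
    then show ?thesis unfolding q_def by simp
  qed
  then show ?thesis unfolding R_def by (intro Limsup_bounded always_eventually) auto
qed


end
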